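(* Let $X\subseteq\mathcal{A}^{\mathbb{Z}}$ be an aperiodic subshift having at most $L$ right asymptotic tails and at most $L$ left asymptotic tails. Then $X$ has at most $2L^2\cdot(\#\mathcal{A})^2$ centered asymptotic pairs.
   Context: A pair $(x,\tilde x)$ of points of $X$ is right asymptotic if there is $k\in\mathbb{Z}$ with $x_{(k,\infty)}=\tilde x_{(k,\infty)}$ and $x_k\ne\tilde x_k$; it is centered right asymptotic if moreover $k=0$. A right asymptotic tail of $X$ is a one-sided sequence $x_{(0,\infty)}$ where $(x,\tilde x)$ is a centered right asymptotic pair in $X$. Left asymptotic pairs, centered left asymptotic pairs and left asymptotic tails are defined symmetrically (with $x_{(-\infty,k)}=\tilde x_{(-\infty,k)}$, $x_k\neq\tilde x_k$, and tails $x_{(-\infty,0)}$). A centered asymptotic pair is a centered right asymptotic pair or a centered left asymptotic pair. $X$ is aperiodic if it has no periodic points. *)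

theory Defs
  imports Main
begin

definition shift :: "(int \<Rightarrow> 'a) \<Rightarrow> int \<Rightarrow> 'a" where
  "shift x = (\<lambda>i. x (i + 1))"

text \<open>Closedness in the product topology: a point all of whose finite windows
occur in points of X belongs to X.\<close>
definition subshift :: "'a set \<Rightarrow> (int \<Rightarrow> 'a) set \<Rightarrow> bool" where
  "subshift A X \<longleftrightarrow> finite A \<and>
     X \<subseteq> {x. \<forall>i. x i \<in> A} \<and>
     shift ` X = X \<and>
     (\<forall>x. (\<forall>i. x i \<in> A) \<longrightarrow>
          (\<forall>n::nat. \<exists>y\<in>X. \<forall>i. \<bar>i\<bar> \<le> int n \<longrightarrow> y i = x i) \<longrightarrow> x \<in> X)"

definition aperiodic :: "(int \<Rightarrow> 'a) set \<Rightarrow> bool" where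
  "aperiodic X \<longleftrightarrow> \<not> (\<exists>x\<in>X. \<exists>p::int. p > 0 \<and> (\<forall>i. x (i + p) = x i))"

definition centered_right_asymptotic :: "(int \<Rightarrow> 'a) \<Rightarrow> (int \<Rightarrow> 'a) \<Rightarrow> bool" where
  "centered_right_asymptotic x y \<longleftrightarrow> (\<forall>i>0. x i = y i) \<and> x 0 \<noteq> y 0"

definition centered_left_asymptotic :: "(int \<Rightarrow> 'a) \<Rightarrow> (int \<Rightarrow> 'a) \<Rightarrow> bool" where
  "centered_left_asymptotic x y \<longleftrightarrow> (\<forall>i<0. x i = y i) \<and> x 0 \<noteq> y 0"

text \<open>Right tail x_(0,inf) encoded as nat-indexed sequence n |-> x (n+1);
left tail x_(-inf,0) encoded as n |-> x (-n-1).\<close>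
definition right_tails :: "(int \<Rightarrow> 'a) set \<Rightarrow> (nat \<Rightarrow> 'a) set" where
  "right_tails X = {(\<lambda>n. x (int n + 1)) | x. x \<in> X \<and>
      (\<exists>y\<in>X. centered_right_asymptotic x y)}"

definition left_tails :: "(int \<Rightarrow> 'a) set \<Rightarrow> (nat \<Rightarrow> 'a) set" where
  "left_tails X = {(\<lambda>n. x (- int n - 1)) | x. x \<in> X \<and>
      (\<exists>y\<in>X. centered_left_asymptotic x y)}"

definition centered_asymptotic_pairs :: "(int \<Rightarrow> 'a) set \<Rightarrow> ((int \<Rightarrow> 'a) \<times> (int \<Rightarrow> 'a)) set" where
  "centered_asymptotic_pairs X = {(x, y). x \<in> X \<and> y \<in> X \<and>
      (centered_right_asymptotic x y \<or> centered_left_asymptotic x y)}"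

end

theory Submission imports Defs begin

definition rv :: "(int \<Rightarrow> 'a) \<Rightarrow> int \<Rightarrow> 'a" where "rv x = (\<lambda>i. x (- i))"

lemma rv_rv[simp]: "rv (rv x) = x" by (simp add: rv_def)

lemma shift_closed:
  assumes "subshift A X" "x \<in> X"
  shows "(\<lambda>i. x (i + m)) \<in> X"
proof -
  have sh: "shift ` X = X" using assms(1) by (simp add: subshift_def)
  have fw: "(\<lambda>i. x (i + int n)) \<in> X" for n
  proof (induction n)
    case 0 then show ?case using assms(2) by simp
  next
    case (Suc n)
    then have "shift (\<lambda>i. x (i + int n)) \<in> X" using sh by blast
    moreover have "shift (\<lambda>i. x (i + int n)) = (\<lambda>i. x (i + int (Suc n)))"
      by (simp add: shift_def algebra_simps)
    ultimately show ?case by simp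
  qed
  have bw: "(\<lambda>i. x (i - int n)) \<in> X" for n
  proof (induction n)
    case 0 then show ?case using assms(2) by simp
  next
    case (Suc n)
    then have "(\<lambda>i. x (i - int n)) \<in> shift ` X" using sh by simp
    then obtain z where z: "z \<in> X" "shift z = (\<lambda>i. x (i - int n))" by (metis imageE)
    have "z = (\<lambda>i. x (i - int (Suc n)))"
    proof
      fix i
      have "shift z (i - 1) = x (i - 1 - int n)" using z(2) by simp
      then show "z i = x (i - int (Suc n))" by (simp add: shift_def algebra_simps)
    qed
    then show ?case using z(1) by simp
  qed
  show ?thesis
  proof (cases "m \<ge> 0")
    case True
    then have "m = int (nat m)" by simp
    then show ?thesis using fw[of "nat m"] by metis
  next
    case False
    then have "(\<lambda>i. x (i + m)) = (\<lambda>i. x (i - int (nat (-m))))" by simp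
    then show ?thesis using bw[of "nat (-m)"] by simp
  qed
qed

lemma periodic_limit:
  assumes ss: "subshift A X" and ap: "aperiodic X" and x: "x \<in> X" and p: "p > 0"
    and q: "\<forall>i. q (i + p) = q i"
    and lim: "\<forall>n::nat. \<exists>m. \<forall>i. \<bar>i\<bar> \<le> int n \<longrightarrow> x (i + m) = q i"
  shows False
proof -
  have XA: "X \<subseteq> {x. \<forall>i. x i \<in> A}" using ss by (simp add: subshift_def)
  have qA: "\<forall>i. q i \<in> A"
  proof
    fix i
    obtain m where "\<forall>j. \<bar>j\<bar> \<le> int (nat \<bar>i\<bar>) \<longrightarrow> x (j + m) = q j" using lim by blast
    then have "q i = x (i + m)" by simp
    moreover have "(\<lambda>j. x (j + m)) \<in> X" using shift_closed[OF ss x] .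
    ultimately show "q i \<in> A" using XA by auto
  qed
  have "\<forall>n::nat. \<exists>y\<in>X. \<forall>i. \<bar>i\<bar> \<le> int n \<longrightarrow> y i = q i"
  proof
    fix n :: nat
    obtain m where "\<forall>i. \<bar>i\<bar> \<le> int n \<longrightarrow> x (i + m) = q i" using lim by blast
    moreover have "(\<lambda>j. x (j + m)) \<in> X" using shift_closed[OF ss x] .
    ultimately show "\<exists>y\<in>X. \<forall>i. \<bar>i\<bar> \<le> int n \<longrightarrow> y i = q i" by auto
  qed
  then have "q \<in> X" using ss qA unfolding subshift_def by blast
  then show False using ap p q unfolding aperiodic_def by blast
qed

lemma no_right_ev_periodic:
  assumes ss: "subshift A X" and ap: "aperiodic X" and x: "x \<in> X" and p: "p > 0"
    and per: "\<forall>i\<ge>N. x (i + p) = x i"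
  shows False
proof -
  have it: "x (j + int t * p) = x j" if "j \<ge> N" for j t
  proof (induction t)
    case 0 then show ?case by simp
  next
    case (Suc t)
    have "j + int t * p \<ge> N" using that p by (simp add: add_increasing2)
    then have "x (j + int t * p + p) = x (j + int t * p)" using per by blast
    then show ?case using Suc by (simp add: algebra_simps)
  qed
  have red: "x j = x (N + (j - N) mod p)" if "j \<ge> N" for j
  proof -
    have d: "(j - N) div p \<ge> 0" using that p by (simp add: pos_imp_zdiv_nonneg_iff)
    have "j = (N + (j - N) mod p) + int (nat ((j - N) div p)) * p"
      using d by (simp add: algebra_simps)
    moreover have "N + (j - N) mod p \<ge> N" using p by simp
    ultimately show ?thesis using it by metis
  qed
  define q where "q = (\<lambda>i. x (N + (i - N) mod p))"
  have qp: "\<forall>i. q (i + p) = q i"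
  proof
    fix i
    have "i + p - N = (i - N) + p" by simp
    then have "(i + p - N) mod p = (i - N) mod p" by (metis mod_add_self2)
    then show "q (i + p) = q i" unfolding q_def by simp
  qed
  have lim: "\<forall>n::nat. \<exists>m. \<forall>i. \<bar>i\<bar> \<le> int n \<longrightarrow> x (i + m) = q i"
  proof
    fix n :: nat
    define m where "m = p * (int n + \<bar>N\<bar>)"
    have "\<forall>i. \<bar>i\<bar> \<le> int n \<longrightarrow> x (i + m) = q i"
    proof (intro allI impI)
      fix i assume i: "\<bar>i\<bar> \<le> int n"
      have c0: "int n + \<bar>N\<bar> \<ge> 0" by simp
      have "1 * (int n + \<bar>N\<bar>) \<le> p * (int n + \<bar>N\<bar>)"
        using p c0 by (intro mult_right_mono) auto
      then have "m \<ge> int n + \<bar>N\<bar>" unfolding m_def by simp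
      then have "i + m \<ge> N" using i by linarith
      then have "x (i + m) = x (N + (i + m - N) mod p)" using red by blast
      also have "(i + m - N) mod p = (i - N) mod p"
      proof -
        have "i + m - N = (i - N) + (int n + \<bar>N\<bar>) * p" unfolding m_def by (simp add: algebra_simps)
        then show ?thesis by (metis mod_mult_self1)
      qed
      finally show "x (i + m) = q i" unfolding q_def .
    qed
    then show "\<exists>m. \<forall>i. \<bar>i\<bar> \<le> int n \<longrightarrow> x (i + m) = q i" by blast
  qed
  show False using periodic_limit[OF ss ap x p qp lim] .
qed


lemma subshift_rev:
  assumes ss: "subshift A X"
  shows "subshift A (rv ` X)"
proof -
  have fin: "finite A" and XA: "X \<subseteq> {x. \<forall>i. x i \<in> A}"
    and cl: "\<forall>x. (\<forall>i. x i \<in> A) \<longrightarrow>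
          (\<forall>n::nat. \<exists>y\<in>X. \<forall>i. \<bar>i\<bar> \<le> int n \<longrightarrow> y i = x i) \<longrightarrow> x \<in> X"
    using ss by (auto simp: subshift_def)
  have A1: "rv ` X \<subseteq> {x. \<forall>i. x i \<in> A}" using XA by (auto simp: rv_def)
  have A2: "shift ` (rv ` X) = rv ` X"
  proof
    show "shift ` rv ` X \<subseteq> rv ` X"
    proof
      fix w assume "w \<in> shift ` rv ` X"
      then obtain x where x: "x \<in> X" "w = shift (rv x)" by auto
      have "w = rv (\<lambda>i. x (i + (-1)))" using x(2) by (simp add: shift_def rv_def algebra_simps)
      then show "w \<in> rv ` X" using shift_closed[OF ss x(1)] by blast
    qed
  next
    show "rv ` X \<subseteq> shift ` rv ` X"
    proof
      fix w assume "w \<in> rv ` X"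
      then obtain x where x: "x \<in> X" "w = rv x" by auto
      have "w = shift (rv (\<lambda>i. x (i + 1)))" using x(2) by (simp add: shift_def rv_def algebra_simps)
      then show "w \<in> shift ` rv ` X" using shift_closed[OF ss x(1)] by blast
    qed
  qed
  have A3: "\<forall>z. (\<forall>i. z i \<in> A) \<longrightarrow>
          (\<forall>n::nat. \<exists>y\<in>rv ` X. \<forall>i. \<bar>i\<bar> \<le> int n \<longrightarrow> y i = z i) \<longrightarrow> z \<in> rv ` X"
  proof (intro allI impI)
    fix z :: "int \<Rightarrow> 'a"
    assume zA: "\<forall>i. z i \<in> A" and h: "\<forall>n::nat. \<exists>y\<in>rv ` X. \<forall>i. \<bar>i\<bar> \<le> int n \<longrightarrow> y i = z i"
    have "\<forall>n::nat. \<exists>y\<in>X. \<forall>i. \<bar>i\<bar> \<le> int n \<longrightarrow> y i = rv z i"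
    proof
      fix n :: nat
      obtain y where y: "y \<in> rv ` X" "\<forall>i. \<bar>i\<bar> \<le> int n \<longrightarrow> y i = z i" using h by blast
      then obtain y0 where y0: "y0 \<in> X" "y = rv y0" by auto
      have "\<forall>i. \<bar>i\<bar> \<le> int n \<longrightarrow> y0 i = rv z i"
      proof (intro allI impI)
        fix i :: int assume "\<bar>i\<bar> \<le> int n"
        then have "y (- i) = z (- i)" using y(2) by simp
        then show "y0 i = rv z i" using y0(2) by (simp add: rv_def)
      qed
      then show "\<exists>y\<in>X. \<forall>i. \<bar>i\<bar> \<le> int n \<longrightarrow> y i = rv z i" using y0(1) by blast
    qed
    moreover have "\<forall>i. rv z i \<in> A" using zA by (simp add: rv_def)
    ultimately have "rv z \<in> X" using cl by blast
    then have "rv (rv z) \<in> rv ` X" by blast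
    then show "z \<in> rv ` X" by simp
  qed
  show ?thesis unfolding subshift_def using fin A1 A2 A3 by blast
qed

lemma aperiodic_rev:
  assumes "aperiodic X"
  shows "aperiodic (rv ` X)"
  unfolding aperiodic_def
proof
  assume "\<exists>x\<in>rv ` X. \<exists>p::int. p > 0 \<and> (\<forall>i. x (i + p) = x i)"
  then obtain x p where x: "x \<in> X" "p > 0" "\<forall>i. rv x (i + p) = rv x i" by auto
  have "\<forall>i. x (i + p) = x i"
  proof
    fix i
    have "rv x (- i - p + p) = rv x (- i - p)" using x(3) by blast
    then show "x (i + p) = x i" by (simp add: rv_def add.commute)
  qed
  then show False using assms x unfolding aperiodic_def by blast
qed


lemma offsets:
  fixes x y :: "int \<Rightarrow> 'a"
  assumes ss: "subshift A X" and ap: "aperiodic X" and yX: "y \<in> X"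
    and h1: "\<forall>j>0. x j = y j" and h2: "x 0 \<noteq> y 0"
    and h3: "\<forall>j>0. x (j + a) = y (j + b)" and h4: "x a \<noteq> y b"
  shows "a = 0 \<and> b = 0"
proof (cases "a = b")
  case True
  have "a = 0"
  proof (rule ccontr)
    assume "a \<noteq> 0"
    then consider "a > 0" | "a < 0" by linarith
    then show False
    proof cases
      case 1 then show False using h1 h4 True by auto
    next
      case 2
      then have "- a > 0" by simp
      then have "x (- a + a) = y (- a + b)" using h3 by blast
      then show False using h2 True by simp
    qed
  qed
  then show ?thesis using True by simp
next
  case False
  define N where "N = \<bar>a\<bar> + \<bar>b\<bar> + 1"
  have eq: "y (j + b) = y (j + a)" if "j \<ge> N" for j
  proof -
    have "j > 0" "j + a > 0" using that unfolding N_def by linarith+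
    then show ?thesis using h1 h3 by metis
  qed
  consider "a < b" | "b < a" using False by linarith
  then show ?thesis
  proof cases
    case 1
    have "\<forall>i\<ge>N + a. y (i + (b - a)) = y i"
    proof (intro allI impI)
      fix i assume "i \<ge> N + a"
      then have "y ((i - a) + b) = y ((i - a) + a)" using eq[of "i - a"] by simp
      then show "y (i + (b - a)) = y i" by (simp add: algebra_simps)
    qed
    then show ?thesis using no_right_ev_periodic[OF ss ap yX, of "b - a" "N + a"] 1 by simp
  next
    case 2
    have "\<forall>i\<ge>N + b. y (i + (a - b)) = y i"
    proof (intro allI impI)
      fix i assume "i \<ge> N + b"
      then have "y ((i - b) + b) = y ((i - b) + a)" using eq[of "i - b"] by simp
      then show "y (i + (a - b)) = y i" by (simp add: algebra_simps)
    qed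
    then show ?thesis using no_right_ev_periodic[OF ss ap yX, of "a - b" "N + b"] 2 by simp
  qed
qed

lemma right_bound:
  assumes ss: "subshift A X" and ap: "aperiodic X"
    and fin: "finite (right_tails X)" and cL: "card (right_tails X) \<le> L"
  shows "finite {(x, y). x \<in> X \<and> y \<in> X \<and> centered_right_asymptotic x y} \<and>
         card {(x, y). x \<in> X \<and> y \<in> X \<and> centered_right_asymptotic x y} \<le> L^2 * (card A)^2"
proof -
  define R where "R = {(x, y). x \<in> X \<and> y \<in> X \<and> centered_right_asymptotic x y}"
  define brs where "brs x = {k::int. \<exists>z\<in>X. (\<forall>i>k. z i = x i) \<and> z k \<noteq> x k}" for x :: "int \<Rightarrow> 'a"
  define tl where "tl x k = (\<lambda>n::nat. x (int n + 1 + k))" for x :: "int \<Rightarrow> 'a" and k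
  have finA: "finite A" and XA: "X \<subseteq> {x. \<forall>i. x i \<in> A}" using ss by (auto simp: subshift_def)
  have tl_in: "tl x k \<in> right_tails X" if x: "x \<in> X" and k: "k \<in> brs x" for x k
  proof -
    obtain z where z: "z \<in> X" "\<forall>i>k. z i = x i" "z k \<noteq> x k" using k unfolding brs_def by blast
    define x' where "x' = (\<lambda>i. x (i + k))"
    define y' where "y' = (\<lambda>i. z (i + k))"
    have "x' \<in> X" "y' \<in> X" unfolding x'_def y'_def using shift_closed[OF ss] x z(1) by auto
    moreover have "centered_right_asymptotic x' y'"
      unfolding centered_right_asymptotic_def x'_def y'_def using z(2,3) by auto
    moreover have "tl x k = (\<lambda>n. x' (int n + 1))" unfolding tl_def x'_def by simp
    ultimately show ?thesis unfolding right_tails_def by blast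
  qed
  have tl_inj: "inj_on (tl x) (brs x)" if x: "x \<in> X" for x
  proof -
    have nolt: False if "tl x k = tl x k'" "k < k'" for k k'
    proof -
      have "\<forall>i\<ge>k + 1. x (i + (k' - k)) = x i"
      proof (intro allI impI)
        fix i assume i: "i \<ge> k + 1"
        have "tl x k (nat (i - k - 1)) = tl x k' (nat (i - k - 1))" using that(1) by simp
        then show "x (i + (k' - k)) = x i" using i unfolding tl_def by (simp add: algebra_simps)
      qed
      then show False using no_right_ev_periodic[OF ss ap x, of "k' - k" "k + 1"] that(2) by simp
    qed
    show ?thesis
    proof (rule inj_onI)
      fix k k' assume "k \<in> brs x" "k' \<in> brs x" "tl x k = tl x k'"
      then show "k = k'" using nolt[of k k'] nolt[of k' k] by (metis linorder_neqE)
    qed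
  qed
  have fin_brs: "finite (brs x)" if x: "x \<in> X" for x
  proof -
    have "tl x ` brs x \<subseteq> right_tails X" using tl_in x by blast
    then have "finite (tl x ` brs x)" using fin finite_subset by blast
    then show ?thesis using finite_imageD tl_inj x by blast
  qed
  define k0 where "k0 x = Min (brs x)" for x
  define lab where "lab x = (tl x (k0 x), x (k0 x))" for x
  have K: "k0 x \<in> brs x \<and> (\<forall>j\<in>brs x. k0 x \<le> j)" if "x \<in> X" "brs x \<noteq> {}" for x
    unfolding k0_def using fin_brs[OF that(1)] that(2) by auto
  have U: "\<forall>i. x' (i + k0 x') = x (i + k0 x)"
    if x: "x \<in> X" "x' \<in> X" "brs x \<noteq> {}" "lab x = lab x'" for x x'
  proof (rule ccontr)
    assume "\<not> (\<forall>i. x' (i + k0 x') = x (i + k0 x))"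
    then obtain i where i: "x' (i + k0 x') \<noteq> x (i + k0 x)" by blast
    have nn: "x' (i + k0 x') = x (i + k0 x)" if "i \<ge> 0" for i
    proof (cases "i = 0")
      case True then show ?thesis using x(4) unfolding lab_def by simp
    next
      case False
      have "tl x' (k0 x') (nat (i - 1)) = tl x (k0 x) (nat (i - 1))" using x(4) unfolding lab_def by simp
      then show ?thesis using False that unfolding tl_def by simp
    qed
    define P where "P m = (x' (- int m - 1 + k0 x') \<noteq> x (- int m - 1 + k0 x))" for m :: nat
    have "i < 0" using i nn by (meson not_le)
    then have "P (nat (- i - 1))" unfolding P_def using i by simp
    then have Pm: "P (LEAST m. P m)" by (rule LeastI)
    define m0 where "m0 = (LEAST m. P m)"
    define z where "z = (\<lambda>j. x' (j + k0 x' - k0 x))"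
    have zX: "z \<in> X" unfolding z_def using shift_closed[OF ss x(2), of "k0 x' - k0 x"] by (simp add: diff_add_eq add_diff_eq)
    have agree: "\<forall>j > k0 x - int m0 - 1. z j = x j"
    proof (intro allI impI)
      fix j assume j: "j > k0 x - int m0 - 1"
      show "z j = x j"
      proof (cases "j - k0 x \<ge> 0")
        case True
        then show ?thesis using nn[of "j - k0 x"] unfolding z_def by (simp add: algebra_simps)
      next
        case False
        define m' where "m' = nat (- (j - k0 x) - 1)"
        have "m' < m0" unfolding m'_def using j False by linarith
        then have "\<not> P m'" unfolding m0_def by (rule not_less_Least)
        moreover have "- int m' - 1 = j - k0 x" unfolding m'_def using False by simp
        ultimately show ?thesis unfolding P_def z_def by (simp add: algebra_simps)
      qed
    qed
    have diff: "z (k0 x - int m0 - 1) \<noteq> x (k0 x - int m0 - 1)"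
      using Pm unfolding P_def z_def m0_def by (simp add: algebra_simps)
    have "k0 x - int m0 - 1 \<in> brs x" unfolding brs_def using zX agree diff by blast
    then show False using K[OF x(1) x(3)] by fastforce
  qed
  have zero_brs: "0 \<in> brs x \<and> 0 \<in> brs y" if "(x, y) \<in> R" for x y
  proof -
    have h: "x \<in> X" "y \<in> X" "\<forall>i>0. x i = y i" "x 0 \<noteq> y 0"
      using that unfolding R_def centered_right_asymptotic_def by auto
    have "\<exists>z\<in>X. (\<forall>i>0. z i = x i) \<and> z 0 \<noteq> x 0" using h by (metis)
    moreover have "\<exists>z\<in>X. (\<forall>i>0. z i = y i) \<and> z 0 \<noteq> y 0" using h by (metis)
    ultimately show ?thesis unfolding brs_def by simp
  qed
  have inj: "inj_on (\<lambda>(x, y). (lab x, lab y)) R"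
  proof (rule inj_onI, clarify)
    fix x y x' y' assume p1: "(x, y) \<in> R" and p2: "(x', y') \<in> R"
      and e1: "lab x = lab x'" and e2: "lab y = lab y'"
    have X4: "x \<in> X" "y \<in> X" "x' \<in> X" "y' \<in> X" using p1 p2 unfolding R_def by auto
    have ne: "brs x \<noteq> {}" "brs y \<noteq> {}" using zero_brs[OF p1] by auto
    define a where "a = k0 x - k0 x'"
    define b where "b = k0 y - k0 y'"
    have ux: "x' j = x (j + a)" for j
      using U[OF X4(1) X4(3) ne(1) e1, rule_format, of "j - k0 x'"] unfolding a_def by (simp add: algebra_simps)
    have uy: "y' j = y (j + b)" for j
      using U[OF X4(2) X4(4) ne(2) e2, rule_format, of "j - k0 y'"] unfolding b_def by (simp add: algebra_simps)
    have c1: "\<forall>j>0. x j = y j" "x 0 \<noteq> y 0" using p1 unfolding R_def centered_right_asymptotic_def by auto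
    have c2: "\<forall>j>0. x (j + a) = y (j + b)" "x a \<noteq> y b"
      using p2 ux uy unfolding R_def centered_right_asymptotic_def by (auto dest: spec[of _ 0])
    have "a = 0 \<and> b = 0" using offsets[OF ss ap X4(2) c1 c2] .
    then show "x = x' \<and> y = y'" using ux uy by auto
  qed
  define T where "T = right_tails X \<times> A"
  have lab_in: "lab x \<in> T" if "x \<in> X" "brs x \<noteq> {}" for x
    using tl_in[OF that(1)] K[OF that] XA that(1) unfolding lab_def T_def by auto
  have img: "(\<lambda>(x, y). (lab x, lab y)) ` R \<subseteq> T \<times> T"
  proof
    fix w assume "w \<in> (\<lambda>(x, y). (lab x, lab y)) ` R"
    then obtain x y where p: "(x, y) \<in> R" and w: "w = (lab x, lab y)" by auto
    then have "x \<in> X" "y \<in> X" using p unfolding R_def by auto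
    then show "w \<in> T \<times> T" using lab_in zero_brs[OF p] w by blast
  qed
  have finT: "finite (T \<times> T)" unfolding T_def using fin finA by simp
  have "finite R" using finite_imageD[OF finite_subset[OF img finT] inj] .
  moreover have "card R \<le> card (T \<times> T)" using card_inj_on_le[OF inj img finT] .
  moreover have "card (T \<times> T) = (card (right_tails X) * card A)^2"
    unfolding T_def by (simp add: card_cartesian_product power2_eq_square)
  moreover have "(card (right_tails X) * card A)^2 \<le> (L * card A)^2"
    using cL by (intro power_mono mult_right_mono) auto
  ultimately show ?thesis unfolding R_def power_mult_distrib by linarith
qed


theorem lemma6p6:
  fixes A :: "'a set" and X :: "(int \<Rightarrow> 'a) set" and L :: nat
  assumes "subshift A X"
    and "aperiodic X"
    and "finite (right_tails X)" and "card (right_tails X) \<le> L"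
    and "finite (left_tails X)" and "card (left_tails X) \<le> L"
  shows "finite (centered_asymptotic_pairs X) \<and>
         card (centered_asymptotic_pairs X) \<le> 2 * L^2 * (card A)^2"
proof -
  define R where "R = {(x, y). x \<in> X \<and> y \<in> X \<and> centered_right_asymptotic x y}"
  define Lp where "Lp = {(x, y). x \<in> X \<and> y \<in> X \<and> centered_left_asymptotic x y}"
  define R' where "R' = {(x, y). x \<in> rv ` X \<and> y \<in> rv ` X \<and> centered_right_asymptotic x y}"
  have cp: "centered_asymptotic_pairs X = R \<union> Lp"
    unfolding centered_asymptotic_pairs_def R_def Lp_def by auto
  have rR: "finite R \<and> card R \<le> L^2 * (card A)^2"
    using right_bound[OF assms(1-4)] unfolding R_def .
  have sub: "right_tails (rv ` X) \<subseteq> left_tails X"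
  proof
    fix t assume "t \<in> right_tails (rv ` X)"
    then obtain x' y' where h: "t = (\<lambda>n. x' (int n + 1))" "x' \<in> rv ` X" "y' \<in> rv ` X"
      "centered_right_asymptotic x' y'" unfolding right_tails_def by blast
    obtain x y where xy: "x \<in> X" "y \<in> X" "x' = rv x" "y' = rv y" using h(2,3) by blast
    have "centered_left_asymptotic x y"
      unfolding centered_left_asymptotic_def
    proof
      show "\<forall>i<0. x i = y i"
      proof (intro allI impI)
        fix i :: int assume "i < 0"
        then have "x' (- i) = y' (- i)" using h(4) unfolding centered_right_asymptotic_def by simp
        then show "x i = y i" using xy by (simp add: rv_def)
      qed
      show "x 0 \<noteq> y 0" using h(4) xy unfolding centered_right_asymptotic_def by (simp add: rv_def)
    qed
    moreover have "t = (\<lambda>n. x (- int n - 1))" using h(1) xy by (simp add: rv_def minus_add_distrib)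
    ultimately show "t \<in> left_tails X" unfolding left_tails_def using xy by blast
  qed
  have finr: "finite (right_tails (rv ` X))" using sub assms(5) finite_subset by blast
  have cr: "card (right_tails (rv ` X)) \<le> L" using card_mono[OF assms(5) sub] assms(6) by linarith
  have rR': "finite R' \<and> card R' \<le> L^2 * (card A)^2"
    using right_bound[OF subshift_rev[OF assms(1)] aperiodic_rev[OF assms(2)] finr cr] unfolding R'_def .
  have inj: "inj_on (\<lambda>(x, y). (rv x, rv y)) Lp"
    by (rule inj_onI) (auto, metis rv_rv, metis rv_rv)
  have img: "(\<lambda>(x, y). (rv x, rv y)) ` Lp \<subseteq> R'"
  proof
    fix w assume "w \<in> (\<lambda>(x, y). (rv x, rv y)) ` Lp"
    then obtain x y where p: "(x, y) \<in> Lp" and w: "w = (rv x, rv y)" by auto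
    then have "x \<in> X" "y \<in> X" "centered_left_asymptotic x y" unfolding Lp_def by auto
    then show "w \<in> R'" unfolding R'_def w centered_left_asymptotic_def centered_right_asymptotic_def
      by (auto simp: rv_def)
  qed
  have finL: "finite Lp" using finite_imageD[OF finite_subset[OF img] inj] rR' by blast
  have cLp: "card Lp \<le> L^2 * (card A)^2"
    using card_inj_on_le[OF inj img] rR' by linarith
  have "card (R \<union> Lp) \<le> card R + card Lp" by (rule card_Un_le)
  then show ?thesis using cp rR finL cLp by simp
qed

end
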